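(* Let $(X_i)_{i\in\mathbb{Z}}$ be a finite-energy process over a countable alphabet $\mathbb{X}$. Then for every $q>0$, $$\sup_{n\ge2}\mathbb{E}\left[\left(\frac{\mathbf{L}(X_{1:n})}{\log n}\right)^q\right]<\infty.$$
   Context: A stationary process is finite-energy if there are constants $c<1$ and $K$ with $P(X_{n+1:n+m}=u\mid X_{1:n}=w)\le Kc^m$ whenever $P(X_{1:n}=w)>0$, $n,m\in\mathbb{N}$. $\mathbf{L}(w):=\max\{|s|: w=x_1sy_1=x_2sy_2,\ x_1\ne x_2\}$ with $s,x_i,y_i$ finite (possibly empty) strings: the maximal length of a possibly overlapping repeat in $w$. $\log$ is natural. *)

theory Defs
  imports "HOL-Probability.Probability"
begin

definition blk :: "(int \<Rightarrow> 's \<Rightarrow> 'x) \<Rightarrow> int \<Rightarrow> nat \<Rightarrow> 's \<Rightarrow> 'x list" where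
  "blk X a n \<omega> = map (\<lambda>i. X (a + int i) \<omega>) [0..<n]"

definition maxrep :: "'x list \<Rightarrow> nat" where
  "maxrep w = Max {length s | s. \<exists>x1 y1 x2 y2. w = x1 @ s @ y1 \<and> w = x2 @ s @ y2 \<and> x1 \<noteq> x2}"

text \<open>Stationarity: all finite-dimensional (block) distributions are shift invariant.
  Over a countable alphabet these block probabilities determine the law of the process.\<close>
definition stationary_proc :: "'s measure \<Rightarrow> (int \<Rightarrow> 's \<Rightarrow> 'x) \<Rightarrow> bool" where
  "stationary_proc M X \<longleftrightarrow>
     (\<forall>t n w. measure M {\<omega> \<in> space M. blk X t n \<omega> = w} = measure M {\<omega> \<in> space M. blk X 1 n \<omega> = w})"

definition finite_energy :: "'s measure \<Rightarrow> (int \<Rightarrow> 's \<Rightarrow> 'x) \<Rightarrow> bool" where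
  "finite_energy M X \<longleftrightarrow>
     (\<exists>c K::real. c < 1 \<and>
        (\<forall>n m w u. n \<ge> 1 \<longrightarrow> m \<ge> 1 \<longrightarrow> length w = n \<longrightarrow> length u = m \<longrightarrow>
           measure M {\<omega> \<in> space M. blk X 1 n \<omega> = w} > 0 \<longrightarrow>
           measure M {\<omega> \<in> space M. blk X 1 (n + m) \<omega> = w @ u}
             / measure M {\<omega> \<in> space M. blk X 1 n \<omega> = w} \<le> K * c ^ m))"

end

theory Submission
  imports Defs
begin

lemma blk_length[simp]: "length (blk X a n w) = n"
  by (simp add: blk_def)

lemma blk_nth: "t < n \<Longrightarrow> blk X a n w ! t = X (a + int t) w"
  by (simp add: blk_def)

lemma blk_Suc: "blk X a (Suc k) w = blk X a k w @ [X (a + int k) w]"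
  by (simp add: blk_def)

lemma blk_take: "take j (blk X a (j + m) w) = blk X a j w"
  by (simp add: blk_def take_map)

fun ext :: "nat \<Rightarrow> 'x list \<Rightarrow> nat \<Rightarrow> 'x list" where
  "ext i w 0 = w"
| "ext i w (Suc k) = ext i w k @ [ext i w k ! (i + k)]"

lemma ext_length[simp]: "length (ext i w k) = length w + k"
  by (induction k) auto

lemma ext_take: "take (length w) (ext i w k) = w"
  by (induction k) auto

lemma ext_split: "ext i w k = w @ drop (length w) (ext i w k)"
  by (metis append_take_drop_id ext_take)

lemma blk_ext:
  assumes "i < j" "k \<le> m" "\<forall>k<m. X (1 + int (i + k)) w = X (1 + int (j + k)) w"
  shows "blk X 1 (j + k) w = ext i (blk X 1 j w) k"
  using assms(2)
proof (induction k)
  case 0 then show ?case by simp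
next
  case (Suc k)
  then have IH: "blk X 1 (j + k) w = ext i (blk X 1 j w) k" by simp
  have "blk X 1 (j + Suc k) w = blk X 1 (j + k) w @ [X (1 + int (j + k)) w]"
    by (simp add: blk_Suc)
  also have "X (1 + int (j + k)) w = X (1 + int (i + k)) w" using assms(3) Suc by simp
  also have "\<dots> = blk X 1 (j + k) w ! (i + k)" using assms(1) by (simp add: blk_nth)
  finally show ?case using IH by simp
qed

lemma maxrep_set_finite: "finite {length s | s. \<exists>x1 y1 x2 y2. w = x1 @ s @ y1 \<and> w = x2 @ s @ y2 \<and> x1 \<noteq> x2}"
proof (rule finite_subset[of _ "{..length w}"])
  show "{length s | s. \<exists>x1 y1 x2 y2. w = x1 @ s @ y1 \<and> w = x2 @ s @ y2 \<and> x1 \<noteq> x2} \<subseteq> {..length w}"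
    by auto
qed simp

lemma maxrep_set_ne: "w \<noteq> [] \<Longrightarrow> {length s | s. \<exists>x1 y1 x2 y2. w = x1 @ s @ y1 \<and> w = x2 @ s @ y2 \<and> x1 \<noteq> x2} \<noteq> {}"
proof -
  assume "w \<noteq> []"
  then have "w = [] @ [] @ w \<and> w = [hd w] @ [] @ tl w \<and> [] \<noteq> [hd w]" by simp
  then have "length ([]::'a list) \<in> {length s | s. \<exists>x1 y1 x2 y2. w = x1 @ s @ y1 \<and> w = x2 @ s @ y2 \<and> x1 \<noteq> x2}" by blast
  then show ?thesis by blast
qed

lemma maxrep_le: "w \<noteq> [] \<Longrightarrow> maxrep w \<le> length w"
  unfolding maxrep_def
  by (rule Max.boundedI[OF maxrep_set_finite maxrep_set_ne]) auto

lemma maxrep_rep: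
  assumes "w \<noteq> []" "m \<le> maxrep w"
  shows "\<exists>i j. i < j \<and> j + m \<le> length w \<and> (\<forall>k<m. w ! (i + k) = w ! (j + k))"
proof -
  have "maxrep w \<in> {length s | s. \<exists>x1 y1 x2 y2. w = x1 @ s @ y1 \<and> w = x2 @ s @ y2 \<and> x1 \<noteq> x2}"
    unfolding maxrep_def using maxrep_set_finite[of w] maxrep_set_ne[OF assms(1)] by (rule Max_in)
  then have "\<exists>s x1 y1 x2 y2. length s = maxrep w \<and> w = x1 @ s @ y1 \<and> w = x2 @ s @ y2 \<and> x1 \<noteq> x2"
    by (smt (verit) mem_Collect_eq)
  then obtain s x1 y1 x2 y2 where s: "length s = maxrep w" "w = x1 @ s @ y1" "w = x2 @ s @ y2" "x1 \<noteq> x2"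
    by blast
  have ne: "length x1 \<noteq> length x2"
  proof
    assume "length x1 = length x2"
    then have "take (length x1) w = x1" "take (length x1) w = x2" using s by auto
    then show False using s by simp
  qed
  have gen: "(x @ s @ y) ! (length x + k) = s ! k" if "k < length s" for x y :: "'a list" and k
    using that by (simp add: nth_append)
  have key: "\<forall>k<m. w ! (length x1 + k) = s ! k \<and> w ! (length x2 + k) = s ! k"
    using s(1) assms(2) gen[of _ x1 y1] gen[of _ x2 y2] s(2,3) by (metis order_less_le_trans)
  have "length w = length x1 + length s + length y1" "length w = length x2 + length s + length y2"
    using s(2,3) by (metis append.assoc length_append)+
  then have l1: "length x1 + m \<le> length w" "length x2 + m \<le> length w" using s(1) assms(2) by linarith+
  show ?thesis
  proof (cases "length x1 < length x2")
    case True then show ?thesis using key l1 by (intro exI[of _ "length x1"] exI[of _ "length x2"]) auto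
  next
    case False then show ?thesis using key l1 ne by (intro exI[of _ "length x2"] exI[of _ "length x1"]) auto
  qed
qed

lemma blk_meas:
  fixes X :: "int \<Rightarrow> 's \<Rightarrow> 'x::countable"
  assumes X: "\<And>i. X i \<in> M \<rightarrow>\<^sub>M count_space UNIV"
  shows "blk X a n \<in> M \<rightarrow>\<^sub>M count_space UNIV"
proof (induction n)
  case 0
  have "blk X a 0 = (\<lambda>_. [])" by (auto simp: blk_def)
  then show ?case by simp
next
  case (Suc n)
  have eq: "blk X a (Suc n) -` {w} \<inter> space M =
     (if w = [] then {} else (blk X a n -` {butlast w} \<inter> space M) \<inter> (X (a + int n) -` {last w} \<inter> space M))" for w
  proof (cases "w = []")
    case True then show ?thesis by (auto simp: blk_Suc)
  next
    case False
    then have "(v @ [x] = w) \<longleftrightarrow> (v = butlast w \<and> x = last w)" for v x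
      by (metis append_butlast_last_id butlast_snoc last_snoc)
    then show ?thesis using False by (auto simp: blk_Suc)
  qed
  show ?case unfolding measurable_count_space_eq2_countable
  proof (intro conjI ballI)
    fix w :: "'x list"
    show "blk X a (Suc n) -` {w} \<inter> space M \<in> sets M"
      unfolding eq using measurable_sets[OF Suc, of "{butlast w}"] measurable_sets[OF X, of "{last w}"]
      by auto
  qed auto
qed

lemma ev_sets:
  fixes X :: "int \<Rightarrow> 's \<Rightarrow> 'x::countable"
  assumes X: "\<And>i. X i \<in> M \<rightarrow>\<^sub>M count_space UNIV"
  shows "{\<omega> \<in> space M. P (blk X a n \<omega>)} \<in> sets M"
proof -
  have "{\<omega> \<in> space M. P (blk X a n \<omega>)} = blk X a n -` {v. P v} \<inter> space M" by auto
  then show ?thesis using measurable_sets[OF blk_meas[OF X], of "{v. P v}"] by simp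
qed

lemma ev_sub: "{\<omega> \<in> space M. blk X 1 (j + m) \<omega> = v} \<subseteq> {\<omega> \<in> space M. blk X 1 j \<omega> = take j v}"
  by (auto simp: blk_take[symmetric])

definition Eset :: "'s measure \<Rightarrow> (int \<Rightarrow> 's \<Rightarrow> 'x) \<Rightarrow> nat \<Rightarrow> nat \<Rightarrow> nat \<Rightarrow> 's set" where
  "Eset M X i j m = {\<omega> \<in> space M. \<forall>k<m. X (1 + int (i + k)) \<omega> = X (1 + int (j + k)) \<omega>}"

lemma Eset_sets:
  fixes X :: "int \<Rightarrow> 's \<Rightarrow> 'x::countable"
  assumes X: "\<And>i. X i \<in> M \<rightarrow>\<^sub>M count_space UNIV" and "i < j"
  shows "Eset M X i j m \<in> sets M"
proof -
  have "Eset M X i j m = {\<omega> \<in> space M. (\<lambda>v. \<forall>k<m. v ! (i + k) = v ! (j + k)) (blk X 1 (j + m) \<omega>)}"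
    unfolding Eset_def using assms(2) by (auto simp: blk_nth)
  then show ?thesis using ev_sets[OF X] by simp
qed

lemma Eset_mono: "Eset M X i j (Suc m) \<subseteq> Eset M X i j m"
  unfolding Eset_def by auto

lemma Eset_bound:
  fixes X :: "int \<Rightarrow> 's \<Rightarrow> 'x::countable" and c K :: real
  assumes P: "prob_space M" and X: "\<And>i. X i \<in> M \<rightarrow>\<^sub>M count_space UNIV"
    and FE: "\<forall>n m w u. n \<ge> 1 \<longrightarrow> m \<ge> 1 \<longrightarrow> length w = n \<longrightarrow> length u = m \<longrightarrow>
           measure M {\<omega> \<in> space M. blk X 1 n \<omega> = w} > 0 \<longrightarrow>
           measure M {\<omega> \<in> space M. blk X 1 (n + m) \<omega> = w @ u}
             / measure M {\<omega> \<in> space M. blk X 1 n \<omega> = w} \<le> K * c ^ m"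
    and ij: "i < j" and m: "m \<ge> 1"
  shows "measure M (Eset M X i j m) \<le> max 0 (K * c ^ m)"
proof -
  interpret prob_space M by (rule P)
  define C where "C = max 0 (K * c ^ m)"
  define ev where "ev n w = {\<omega> \<in> space M. blk X 1 n \<omega> = w}" for n w
  define F where "F w = ev (j + m) (ext i w m)" for w
  define W where "W = {w :: 'x list. length w = j}"
  have evs: "ev n w \<in> sets M" for n w unfolding ev_def by (rule ev_sets[OF X])
  have sub: "F w \<subseteq> ev j w" if "w \<in> W" for w
  proof -
    have "take j (ext i w m) = w" using that ext_take[of w i m] by (simp add: W_def)
    then show ?thesis unfolding F_def ev_def using ev_sub[of M X j m "ext i w m"] by simp
  qed
  have trm: "measure M (F w) \<le> C * measure M (ev j w)" if "w \<in> W" for w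
  proof (cases "measure M (ev j w) > 0")
    case True
    define u where "u = drop j (ext i w m)"
    have wu: "ext i w m = w @ u" using ext_split[of i w m] that by (simp add: u_def W_def)
    have lu: "length u = m" using that by (simp add: u_def W_def)
    have "measure M (F w) / measure M (ev j w) \<le> K * c ^ m"
      using FE[rule_format, of j m w u] True ij m lu that
      by (simp add: F_def ev_def wu W_def)
    then have "measure M (F w) \<le> K * c ^ m * measure M (ev j w)"
      using True by (simp add: divide_le_eq)
    also have "\<dots> \<le> C * measure M (ev j w)"
      using True by (intro mult_right_mono) (auto simp: C_def)
    finally show ?thesis .
  next
    case False
    then have "measure M (ev j w) = 0" by (simp add: zero_less_measure_iff)
    then have "measure M (F w) = 0"
      using finite_measure_mono[OF sub[OF that] evs] measure_nonneg[of M "F w"] by linarith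
    then show ?thesis by (simp add: C_def)
  qed
  have cov: "Eset M X i j m \<subseteq> \<Union>(F ` W)"
  proof
    fix \<omega> assume om: "\<omega> \<in> Eset M X i j m"
    have "blk X 1 (j + m) \<omega> = ext i (blk X 1 j \<omega>) m"
      by (rule blk_ext[OF ij order_refl]) (use om in \<open>simp add: Eset_def\<close>)
    then have "\<omega> \<in> F (blk X 1 j \<omega>)" using om by (simp add: F_def ev_def Eset_def)
    moreover have "blk X 1 j \<omega> \<in> W" by (simp add: W_def)
    ultimately show "\<omega> \<in> \<Union>(F ` W)" by blast
  qed
  have cW: "countable W" by simp
  have Fs: "F w \<in> sets M" for w unfolding F_def by (rule evs)
  have disjF: "disjoint_family_on F W"
    unfolding disjoint_family_on_def
  proof (intro ballI impI)
    fix a b assume "a \<in> W" "b \<in> W" "a \<noteq> b"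
    then show "F a \<inter> F b = {}" using sub[of a] sub[of b] by (auto simp: ev_def)
  qed
  have disjev: "disjoint_family_on (ev j) W"
    unfolding disjoint_family_on_def by (auto simp: ev_def)
  have "emeasure M (Eset M X i j m) \<le> emeasure M (\<Union>(F ` W))"
    by (rule emeasure_mono[OF cov]) (use Fs cW in auto)
  also have "\<dots> = (\<integral>\<^sup>+w. emeasure M (F w) \<partial>count_space W)"
    by (rule emeasure_UN_countable[OF Fs cW disjF])
  also have "\<dots> \<le> (\<integral>\<^sup>+w. ennreal C * emeasure M (ev j w) \<partial>count_space W)"
  proof (rule nn_integral_mono)
    fix w assume "w \<in> space (count_space W)"
    then have "w \<in> W" by simp
    then have "ennreal (measure M (F w)) \<le> ennreal (C * measure M (ev j w))"
      using trm by (simp add: ennreal_leI)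
    then show "emeasure M (F w) \<le> ennreal C * emeasure M (ev j w)"
      by (simp add: emeasure_eq_measure C_def ennreal_mult)
  qed
  also have "\<dots> = ennreal C * (\<integral>\<^sup>+w. emeasure M (ev j w) \<partial>count_space W)"
    by (rule nn_integral_cmult) simp
  also have "(\<integral>\<^sup>+w. emeasure M (ev j w) \<partial>count_space W) = emeasure M (\<Union>(ev j ` W))"
    by (rule emeasure_UN_countable[symmetric, OF evs cW disjev])
  also have "ennreal C * emeasure M (\<Union>(ev j ` W)) \<le> ennreal C * 1"
    by (intro mult_left_mono emeasure_le_1) auto
  finally have "emeasure M (Eset M X i j m) \<le> ennreal C" by simp
  then have "ennreal (measure M (Eset M X i j m)) \<le> ennreal C"
    by (simp add: emeasure_eq_measure)
  moreover have "0 \<le> C" by (simp add: C_def)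
  ultimately show ?thesis unfolding C_def[symmetric] using ennreal_le_iff by blast
qed

lemma Eset_bound2:
  fixes X :: "int \<Rightarrow> 's \<Rightarrow> 'x::countable" and c K :: real
  assumes P: "prob_space M" and X: "\<And>i. X i \<in> M \<rightarrow>\<^sub>M count_space UNIV"
    and FE: "\<forall>n m w u. n \<ge> 1 \<longrightarrow> m \<ge> 1 \<longrightarrow> length w = n \<longrightarrow> length u = m \<longrightarrow>
           measure M {\<omega> \<in> space M. blk X 1 n \<omega> = w} > 0 \<longrightarrow>
           measure M {\<omega> \<in> space M. blk X 1 (n + m) \<omega> = w @ u}
             / measure M {\<omega> \<in> space M. blk X 1 n \<omega> = w} \<le> K * c ^ m"
    and ij: "i < j" and m: "m \<ge> 2"
  shows "measure M (Eset M X i j m) \<le> max K 0 * (max c (1/2)) ^ m"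
proof -
  interpret prob_space M by (rule P)
  obtain m' where m': "m = Suc m'" "m' \<ge> 1" using m by (cases m) auto
  have b1: "measure M (Eset M X i j m) \<le> max 0 (K * c ^ m)"
    using Eset_bound[OF P X FE ij] m by simp
  have "measure M (Eset M X i j m) \<le> measure M (Eset M X i j m')"
    using finite_measure_mono[OF Eset_mono Eset_sets[OF X ij]] m'(1) by simp
  also have "\<dots> \<le> max 0 (K * c ^ m')"
    using Eset_bound[OF P X FE ij m'(2)] .
  finally have b2: "measure M (Eset M X i j m) \<le> max 0 (K * c ^ m')" .
  have rhs: "0 \<le> max K 0 * (max c (1/2)) ^ m" by simp
  show ?thesis
  proof (cases "c \<ge> 0")
    case True
    have "max 0 (K * c ^ m) \<le> max K 0 * c ^ m"
      using True by (simp add: mult_right_mono max_def)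
    also have "\<dots> \<le> max K 0 * (max c (1/2)) ^ m"
      using True by (intro mult_left_mono power_mono) auto
    finally show ?thesis using b1 by linarith
  next
    case False
    have "(K * c ^ m) * (K * c ^ m') = c * (K * c ^ m') ^ 2"
      using m'(1) by (simp add: power2_eq_square)
    also have "\<dots> \<le> 0" using False by (simp add: mult_nonpos_nonneg)
    finally have "K * c ^ m \<le> 0 \<or> K * c ^ m' \<le> 0"
      by (metis mult_pos_pos not_le)
    then have "measure M (Eset M X i j m) \<le> 0"
    proof
      assume "K * c ^ m \<le> 0" then show ?thesis using b1 by (simp add: max_absorb1)
    next
      assume "K * c ^ m' \<le> 0" then show ?thesis using b2 by (simp add: max_absorb1)
    qed
    then show ?thesis using rhs by linarith
  qed
qed

theorem lemma2:
  fixes M :: "'s measure" and X :: "int \<Rightarrow> 's \<Rightarrow> 'x::countable" and q :: real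
  assumes "prob_space M"
    and "\<And>i. X i \<in> M \<rightarrow>\<^sub>M count_space UNIV"
    and "stationary_proc M X"
    and "finite_energy M X"
    and "q > 0"
  shows "\<exists>B::real. \<forall>n::nat. n \<ge> 2 \<longrightarrow>
           integral\<^sup>L M (\<lambda>\<omega>. (real (maxrep (blk X 1 n \<omega>)) / ln (real n)) powr q) \<le> B"
proof -
  note P = assms(1) and Xm = assms(2) and q = assms(5)
  interpret prob_space M by (rule P)
  obtain c K :: real where FE: "\<forall>n m w u. n \<ge> 1 \<longrightarrow> m \<ge> 1 \<longrightarrow> length w = n \<longrightarrow> length u = m \<longrightarrow>
           measure M {\<omega> \<in> space M. blk X 1 n \<omega> = w} > 0 \<longrightarrow>
           measure M {\<omega> \<in> space M. blk X 1 (n + m) \<omega> = w @ u}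
             / measure M {\<omega> \<in> space M. blk X 1 n \<omega> = w} \<le> K * c ^ m" and c1: "c < 1"
    using assms(4) unfolding finite_energy_def by blast
  define c1 where "c1 = max c (1/2)"
  define K1 where "K1 = max K 0"
  have c1p: "0 < c1" "c1 < 1" using c1 by (auto simp: c1_def)
  have K1p: "0 \<le> K1" by (simp add: K1_def)
  have hb: "measure M (Eset M X i j m) \<le> K1 * c1 ^ m" if "i < j" "m \<ge> 2" for i j m
    using Eset_bound2[OF P Xm FE that] by (simp add: K1_def c1_def)
  have lnc: "ln c1 < 0" using c1p by simp
  define a where "a = (q + 2) / (- ln c1)"
  have ap: "a > 0" using q lnc unfolding a_def by (intro divide_pos_pos) auto
  have alnc: "a * ln c1 = - (q + 2)" using lnc by (simp add: a_def)
  have ln2: "ln (2::real) > 0" by simp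
  define B0 where "B0 = (a + 3 / ln 2) powr q"
  define D where "D = (1 / ln 2) powr q"
  have B0p: "0 \<le> B0" by (simp add: B0_def)
  have Dp: "0 \<le> D" by (simp add: D_def)
  show ?thesis
  proof (intro exI[of _ "B0 + D * K1"] allI impI)
    fix n :: nat assume n2: "n \<ge> 2"
    have lnn: "ln (real n) \<ge> ln 2" using n2 by simp
    have lnp: "ln (real n) > 0" using n2 by simp
    define m where "m = nat \<lceil>a * ln (real n)\<rceil> + 2"
    have m2: "m \<ge> 2" by (simp add: m_def)
    have mlo: "real m \<ge> a * ln (real n)" unfolding m_def by linarith
    have mhi: "real m < a * ln (real n) + 3" unfolding m_def using ap lnp
      by (simp add: of_nat_nat) linarith
    define Y where "Y \<omega> = (real (maxrep (blk X 1 n \<omega>)) / ln (real n)) powr q" for \<omega>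
    define A where "A = {\<omega> \<in> space M. m \<le> maxrep (blk X 1 n \<omega>)}"
    have As: "A \<in> sets M" unfolding A_def by (rule ev_sets[OF Xm])
    define Ep where "Ep p = (if fst p < snd p then Eset M X (fst p) (snd p) m else {})" for p
    have Eps: "Ep p \<in> sets M" for p unfolding Ep_def using Eset_sets[OF Xm] by auto
    have cover: "A \<subseteq> (\<Union>p\<in>{..<n} \<times> {..<n}. Ep p)"
    proof
      fix \<omega> assume om: "\<omega> \<in> A"
      define w where "w = blk X 1 n \<omega>"
      have "length w = n" by (simp add: w_def)
      then have wne: "w \<noteq> []" using n2 by auto
      obtain i j where ij: "i < j" "j + m \<le> length w" "\<forall>k<m. w ! (i + k) = w ! (j + k)"
        using maxrep_rep[OF wne, of m] om by (auto simp: A_def w_def)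
      have jn: "j < n" "i < n" using ij m2 by (auto simp: w_def)
      have "\<omega> \<in> Eset M X i j m"
        unfolding Eset_def
      proof (intro CollectI conjI allI impI)
        show "\<omega> \<in> space M" using om by (simp add: A_def)
        fix k assume k: "k < m"
        have ik: "i + k < n" "j + k < n" using ij k by (auto simp: w_def)
        have "w ! (i + k) = X (1 + int (i + k)) \<omega>"
          unfolding w_def by (rule blk_nth[OF ik(1)])
        moreover have "w ! (j + k) = X (1 + int (j + k)) \<omega>"
          unfolding w_def by (rule blk_nth[OF ik(2)])
        ultimately show "X (1 + int (i + k)) \<omega> = X (1 + int (j + k)) \<omega>"
          using ij(3) k by metis
      qed
      then have "\<omega> \<in> Ep (i, j)" using ij by (simp add: Ep_def)
      then show "\<omega> \<in> (\<Union>p\<in>{..<n} \<times> {..<n}. Ep p)" using jn by blast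
    qed
    have "measure M A \<le> measure M (\<Union>p\<in>{..<n} \<times> {..<n}. Ep p)"
      by (rule finite_measure_mono[OF cover]) (use Eps in auto)
    also have "\<dots> \<le> (\<Sum>p\<in>{..<n} \<times> {..<n}. measure M (Ep p))"
      by (rule finite_measure_subadditive_finite) (use Eps in auto)
    also have "\<dots> \<le> (\<Sum>p\<in>{..<n} \<times> {..<n}. K1 * c1 ^ m)"
    proof (rule sum_mono)
      fix p :: "nat \<times> nat"
      show "measure M (Ep p) \<le> K1 * c1 ^ m"
        using hb[of "fst p" "snd p" m] m2 K1p c1p by (auto simp: Ep_def)
    qed
    also have "\<dots> = real n * real n * (K1 * c1 ^ m)" by simp
    finally have PA: "measure M A \<le> real n * real n * (K1 * c1 ^ m)" .
    have cm: "c1 ^ m \<le> real n powr (- (q + 2))"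
    proof -
      have "c1 ^ m = exp (real m * ln c1)" using c1p by (simp add: powr_realpow[symmetric] powr_def)
      also have "\<dots> \<le> exp (a * ln (real n) * ln c1)"
        using mlo lnc by (intro exp_mono mult_right_mono_neg) auto
      also have "a * ln (real n) * ln c1 = - (q + 2) * ln (real n)" 
        by (metis alnc mult.commute mult.left_commute)
      also have "exp (- (q + 2) * ln (real n)) = real n powr (- (q + 2))" using lnp n2
        by (simp add: powr_def)
      finally show ?thesis .
    qed
    have npow: "real n powr q * (real n * real n) * real n powr (- (q + 2)) = 1"
    proof -
      have e2: "real n powr 2 = real n * real n"
        by (simp add: powr_numeral power2_eq_square)
      have "real n powr q * real n powr 2 * real n powr (- (q + 2)) = real n powr ((q + 2) + - (q + 2))"
        by (simp only: powr_add)
      also have "\<dots> = 1" using n2 by simp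
      finally show ?thesis unfolding e2 .
    qed
    have Ynn: "0 \<le> Y \<omega>" for \<omega> by (simp add: Y_def)
    have bound: "Y \<omega> \<le> B0 + D * real n powr q * indicator A \<omega>" if om: "\<omega> \<in> space M" for \<omega>
    proof (cases "\<omega> \<in> A")
      case True
      have wne: "blk X 1 n \<omega> \<noteq> []"
      proof
        assume "blk X 1 n \<omega> = []"
        then have "length (blk X 1 n \<omega>) = 0" by (simp only: list.size)
        then show False using n2 by simp
      qed
      have "real (maxrep (blk X 1 n \<omega>)) \<le> real n" using maxrep_le[OF wne] by simp
      then have "real (maxrep (blk X 1 n \<omega>)) / ln (real n) \<le> real n * (1 / ln 2)"
        using lnn lnp ln2 by (simp add: frac_le)
      then have "Y \<omega> \<le> (real n * (1 / ln 2)) powr q"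
        unfolding Y_def using q less_imp_le[OF lnp] by (intro powr_mono2) auto
      also have "\<dots> = D * real n powr q" using powr_mult[of "real n" "1 / ln 2" q] by (simp add: D_def mult.commute)
      finally show ?thesis using True B0p by simp
    next
      case False
      then have "maxrep (blk X 1 n \<omega>) < m" using om by (auto simp: A_def)
      then have "real (maxrep (blk X 1 n \<omega>)) \<le> a * ln (real n) + 3" using mhi by linarith
      then have "real (maxrep (blk X 1 n \<omega>)) / ln (real n) \<le> (a * ln (real n) + 3) / ln (real n)"
        using lnp by (simp add: divide_right_mono)
      also have "\<dots> = a + 3 / ln (real n)" using lnp by (simp add: field_simps)
      also have "\<dots> \<le> a + 3 / ln 2" using lnn ln2 by (simp add: frac_le)
      finally have "Y \<omega> \<le> B0" unfolding Y_def B0_def using q less_imp_le[OF lnp] by (intro powr_mono2) auto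
      then show ?thesis using False by simp
    qed
    have Ymeas: "Y \<in> borel_measurable M"
    proof -
      have "(\<lambda>\<omega>. (\<lambda>v. (real (maxrep v) / ln (real n)) powr q) (blk X 1 n \<omega>)) \<in> borel_measurable M"
        by (rule measurable_compose[OF blk_meas[OF Xm]]) simp
      moreover have "Y = (\<lambda>\<omega>. (\<lambda>v. (real (maxrep v) / ln (real n)) powr q) (blk X 1 n \<omega>))"
        by (simp add: Y_def fun_eq_iff)
      ultimately show ?thesis by simp
    qed
    have i1: "integrable M (\<lambda>\<omega>. D * real n powr q * indicator A \<omega>)"
      using As by (intro Bochner_Integration.integrable_mult_right) (simp add: emeasure_eq_measure)
    have i2: "integrable M (\<lambda>\<omega>. B0)" by simp
    have intR: "integrable M (\<lambda>\<omega>. B0 + D * real n powr q * indicator A \<omega>)"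
      by (rule Bochner_Integration.integrable_add[OF i2 i1])
    have intY: "integrable M Y"
    proof (rule integrable_const_bound[where B = "B0 + D * real n powr q"])
      show "AE x in M. norm (Y x) \<le> B0 + D * real n powr q"
      proof (rule AE_I2)
        fix x assume "x \<in> space M"
        then have "Y x \<le> B0 + D * real n powr q * indicator A x" by (rule bound)
        also have "\<dots> \<le> B0 + D * real n powr q" using Dp by (simp add: indicator_def)
        finally show "norm (Y x) \<le> B0 + D * real n powr q" using Ynn[of x] by simp
      qed
    qed (rule Ymeas)
    have "integral\<^sup>L M Y \<le> integral\<^sup>L M (\<lambda>\<omega>. B0 + D * real n powr q * indicator A \<omega>)"
      by (rule integral_mono[OF intY intR bound])
    also have "\<dots> = B0 + D * real n powr q * measure M A"
      using As by (simp add: Bochner_Integration.integral_add[OF i2 i1] prob_space)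
    also have "\<dots> \<le> B0 + D * real n powr q * (real n * real n * (K1 * c1 ^ m))"
      using PA Dp by (intro add_left_mono mult_left_mono) auto
    also have "\<dots> \<le> B0 + D * real n powr q * (real n * real n * (K1 * real n powr (- (q + 2))))"
      using cm Dp K1p by (intro add_left_mono mult_left_mono) auto
    also have "\<dots> = B0 + D * K1 * (real n powr q * (real n * real n) * real n powr (- (q + 2)))"
      by (simp add: algebra_simps)
    also have "\<dots> = B0 + D * K1" using npow by simp
    finally have fin: "integral\<^sup>L M Y \<le> B0 + D * K1" .
    have "Y = (\<lambda>\<omega>. (real (maxrep (blk X 1 n \<omega>)) / ln (real n)) powr q)"
      by (simp add: Y_def fun_eq_iff)
    then show "integral\<^sup>L M (\<lambda>\<omega>. (real (maxrep (blk X 1 n \<omega>)) / ln (real n)) powr q) \<le> B0 + D * K1"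
      using fin by simp
  qed
qed

end
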